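(* Let $M\ge1$ and $k\in\mathfrak{L}_M$. Then \[ V(k):=\beta(\kappa^{-1}(k))=\bigl\{b\in\mathbb{Z}^{M+1}\,\bigl|\,\min\{\mathbb{1},\tilde{k}\}\leq b\leq\min\{k,\tilde{k}\}\bigr\}; \] equivalently, $V(k)=V_0\times V_1\times\cdots\times V_M$, where $V_n=\bigl\{\min\{1,\tilde{k}_n\},\min\{1,\tilde{k}_n\}+1,\ldots,\min\{k_n,\tilde{k}_n\}\bigr\}$ for $0\leq n\leq M$.
   Context: Fix depths $z_{-1}<z_0<\cdots<z_M$. A (reflection) scattering sequence is a finite sequence $\mathsf{p}=(\mathsf{p}_0,\ldots,\mathsf{p}_L)$ with $L\geq 2$, $\mathsf{p}_0=\mathsf{p}_L=z_{-1}$, $\mathsf{p}_i\in\{z_0,\ldots,z_M\}$ for $1\le i\le L-1$, and for every $0\le i\le L-1$ there is $-1\le j\le M-1$ with $\{\mathsf{p}_i,\mathsf{p}_{i+1}\}=\{z_j,z_{j+1}\}$; $\mathsf{S}_M$ is the set of these. For $\mathsf{p}\in\mathsf{S}_M$ and $0\le n\le M$, let $k_n$ be the number of maximal runs of consecutive indices $i$ with $\mathsf{p}_i\in\{z_n,\ldots,z_M\}$, and $b_n$ the number of those runs of length at least $2$ (equivalently, containing an index $i$ with $\mathsf{p}_i=z_{n+1}$). Then $\kappa(\mathsf{p})=(k_0,\ldots,k_M)$ (transit count vector) and $\beta(\mathsf{p})=(b_0,\ldots,b_M)$ (branch count vector), so $\kappa,\beta:\mathsf{S}_M\to\mathbb{Z}^{M+1}$.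 $\mathfrak{L}_M=\{(k_0,\ldots,k_M)\in\mathbb{Z}_{\ge0}^{M+1}: k_0=1\text{ and for all }n\le M-1,\ k_n=0\Rightarrow k_{n+1}=0\}$. For $k=(k_0,\ldots,k_M)$, $\tilde{k}=(k_1,\ldots,k_M,0)$; $\mathbb{1}=(1,\ldots,1)$; $\min$ and $\le$ are entrywise. *)

theory Defs
  imports Complex_Main
begin

text \<open>Depths are z(-1) < z(0) < ... < z(M); a scattering sequence is a list
  p = [p_0, ..., p_L] of depths (so length p = L + 1).\<close>

definition scat_seq :: "(int \<Rightarrow> real) \<Rightarrow> nat \<Rightarrow> real list \<Rightarrow> bool" where
  "scat_seq z M p \<longleftrightarrow>
     length p \<ge> 3 \<and>
     p ! 0 = z (-1) \<and> p ! (length p - 1) = z (-1) \<and>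
     (\<forall>i. 1 \<le> i \<and> i \<le> length p - 2 \<longrightarrow> p ! i \<in> z ` {0..int M}) \<and>
     (\<forall>i < length p - 1. \<exists>j \<in> {-1..int M - 1}. {p ! i, p ! (i+1)} = {z j, z (j+1)})"

definition runs :: "(int \<Rightarrow> real) \<Rightarrow> nat \<Rightarrow> real list \<Rightarrow> nat \<Rightarrow> (nat \<times> nat) set" where
  "runs z M p n = {(a, b). a \<le> b \<and> b < length p \<and>
      (\<forall>i. a \<le> i \<and> i \<le> b \<longrightarrow> p ! i \<in> z ` {int n..int M}) \<and>
      (a = 0 \<or> p ! (a - 1) \<notin> z ` {int n..int M}) \<and>
      (b = length p - 1 \<or> p ! (b + 1) \<notin> z ` {int n..int M})}"

definition kappa :: "(int \<Rightarrow> real) \<Rightarrow> nat \<Rightarrow> real list \<Rightarrow> int list" where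
  "kappa z M p = map (\<lambda>n. int (card (runs z M p n))) [0..<M+1]"

definition beta :: "(int \<Rightarrow> real) \<Rightarrow> nat \<Rightarrow> real list \<Rightarrow> int list" where
  "beta z M p = map (\<lambda>n. int (card {(a, b) \<in> runs z M p n. a < b})) [0..<M+1]"

definition LM :: "nat \<Rightarrow> int list set" where
  "LM M = {k. length k = M + 1 \<and> (\<forall>n < M + 1. k ! n \<ge> 0) \<and> k ! 0 = 1 \<and>
              (\<forall>n < M. k ! n = 0 \<longrightarrow> k ! (n+1) = 0)}"

definition ktilde :: "int list \<Rightarrow> int list" where
  "ktilde k = tl k @ [0]"

end

theory Submission imports Defs begin

fun c2 :: "int \<Rightarrow> int list \<Rightarrow> nat" where
  "c2 n (x#y#r) = (if x = n-1 \<and> y = n then 1 else 0) + c2 n (y#r)"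
| "c2 n _ = 0"

fun c3 :: "int \<Rightarrow> int list \<Rightarrow> nat" where
  "c3 n (x#y#w#r) = (if x = n-1 \<and> y = n \<and> w = n+1 then 1 else 0) + c3 n (y#w#r)"
| "c3 n _ = 0"

fun stp :: "int list \<Rightarrow> bool" where
  "stp (x#y#r) = (\<bar>y - x\<bar> = 1 \<and> stp (y#r))"
| "stp _ = True"

lemma c2_Cons: "c2 n (x#r) = (if r \<noteq> [] \<and> x = n-1 \<and> hd r = n then 1 else 0) + c2 n r"
  by (cases r) auto

lemma c3_Cons: "c3 n (x#y#r) = (if r \<noteq> [] \<and> x = n-1 \<and> y = n \<and> hd r = n+1 then 1 else 0) + c3 n (y#r)"
  by (cases r) auto

lemma c3_Cons': "c3 n (x#r) = (if length r \<ge> 2 \<and> x = n-1 \<and> hd r = n \<and> hd (tl r) = n+1 then 1 else 0) + c3 n r"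
  apply (cases r)
   apply simp
  apply (rename_tac y r')
  apply (case_tac r')
   apply auto
  done

lemma stp_Cons: "stp (x#r) = ((r = [] \<or> \<bar>hd r - x\<bar> = 1) \<and> stp r)"
  by (cases r) auto

lemma c2_append: "c2 n (xs @ ys) = c2 n xs + c2 n ys +
   (if xs \<noteq> [] \<and> ys \<noteq> [] \<and> last xs = n-1 \<and> hd ys = n then 1 else 0)"
  by (induction xs) (auto simp: c2_Cons)

lemma c2_append_down: "xs = [] \<or> ys = [] \<or> hd ys < last xs \<Longrightarrow> c2 n (xs @ ys) = c2 n xs + c2 n ys"
  by (auto simp: c2_append)

lemma c3_append_down: "xs = [] \<or> ys = [] \<or> hd ys < last xs \<Longrightarrow> c3 n (xs @ ys) = c3 n xs + c3 n ys"
proof (induction xs)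
  case Nil then show ?case by simp
next
  case (Cons x xs)
  show ?case
  proof (cases "ys = []")
    case True then show ?thesis by simp
  next
    case ys: False
    show ?thesis
    proof (cases xs)
      case Nil
      with Cons.prems ys show ?thesis by (auto simp: c3_Cons')
    next
      case (Cons y xs')
      then have IH: "c3 n (xs @ ys) = c3 n xs + c3 n ys" using Cons.IH Cons.prems ys by auto
      show ?thesis
      proof (cases xs')
        case Nil
        with Cons Cons.prems ys IH show ?thesis by (auto simp: c3_Cons)
      next
        case (Cons w r)
        with \<open>xs = y # xs'\<close> IH show ?thesis by (simp add: c3_Cons)
      qed
    qed
  qed
qed

lemma stp_append: "stp xs \<Longrightarrow> stp ys \<Longrightarrow> xs = [] \<or> ys = [] \<or> \<bar>hd ys - last xs\<bar> = 1 \<Longrightarrow> stp (xs @ ys)"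
  by (induction xs) (auto simp: stp_Cons hd_append)

lemma upto_ind: "P (a::int) (b::int)" if "\<And>a b. b < a \<Longrightarrow> P a b" "\<And>a b. a \<le> b \<Longrightarrow> P (a+1) b \<Longrightarrow> P a b"
proof (induction "nat (b - a + 1)" arbitrary: a)
  case 0 then show ?case using that(1) by simp
next
  case (Suc m)
  then have "a \<le> b" by simp
  moreover have "m = nat (b - (a+1) + 1)" using Suc(2) by simp
  ultimately show ?case using Suc(1) that(2) by blast
qed

lemma c2_upto: "c2 n [a..b] = (if a < n \<and> n \<le> b then 1 else 0)"
proof (induction a b rule: upto_ind)
  case (1 a b) then show ?case by simp
next
  case (2 a b)
  have e: "[a..b] = a # [a+1..b]" using 2 upto_rec1 by blast
  show ?case
  proof (cases "a+1 \<le> b")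
    case True
    then have "hd [a+1..b] = a+1" using upto_rec1 by (metis list.sel(1))
    with True 2 show ?thesis unfolding e c2_Cons by auto
  next
    case False
    with 2 show ?thesis unfolding e c2_Cons by auto
  qed
qed


lemma hd_upto: "a \<le> b \<Longrightarrow> hd [a..b] = a"
  by (simp add: upto_rec1)

lemma last_upto: "a \<le> b \<Longrightarrow> last [a..b] = b"
  by (simp add: upto_rec2)

lemma c3_upto: "c3 n [a..b] = (if a < n \<and> n < b then 1 else 0)"
proof (induction a b rule: upto_ind)
  case (1 a b) then show ?case by simp
next
  case (2 a b)
  show ?case
  proof (cases "a+1 \<le> b")
    case True
    have e: "[a..b] = a # (a+1) # [a+2..b]" using 2 True upto_rec1
      by (metis add.assoc one_add_one)
    have e2: "[a+1..b] = (a+1) # [a+2..b]" using True upto_rec1 by (metis add.assoc one_add_one)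
    show ?thesis
    proof (cases "a+2 \<le> b")
      case True
      then have "hd [a+2..b] = a+2" by (simp add: hd_upto)
      with True 2 show ?thesis unfolding e c3_Cons using e2 by auto
    next
      case False
      with 2 show ?thesis unfolding e c3_Cons using e2 by auto
    qed
  next
    case False
    with 2 show ?thesis by (simp add: upto_rec1)
  qed
qed

lemma stp_upto: "stp [a..b]"
proof (induction a b rule: upto_ind)
  case (1 a b) then show ?case by simp
next
  case (2 a b) then show ?case by (cases "a+1 \<le> b") (simp_all add: upto_rec1[of a b] stp_Cons hd_upto)
qed

lemma stp_snoc: "stp (xs @ [x]) = (stp xs \<and> (xs = [] \<or> \<bar>x - last xs\<bar> = 1))"
  by (induction xs) (auto simp: stp_Cons)

lemma stp_rev: "stp (rev xs) = stp xs"
  by (induction xs) (auto simp: stp_Cons stp_snoc last_rev abs_minus_commute)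


lemma c2_dec: "sorted_wrt (>) xs \<Longrightarrow> c2 n xs = 0"
proof (induction xs)
  case Nil then show ?case by simp
next
  case (Cons x xs)
  have "xs \<noteq> [] \<Longrightarrow> hd xs < x" using Cons(2) by (cases xs) auto
  moreover have "c2 n xs = 0" using Cons by simp
  ultimately show ?case unfolding c2_Cons by (cases "xs = []") auto
qed

lemma c3_le_c2: "c3 n xs \<le> c2 n xs"
proof (induction xs)
  case Nil then show ?case by simp
next
  case (Cons x xs) then show ?case by (cases xs) (auto simp: c3_Cons c2_Cons)
qed

lemma c2_rev_upto: "c2 n (rev [a..b]) = 0"
  by (rule c2_dec) (simp add: sorted_wrt_rev)

lemma c3_rev_upto: "c3 n (rev [a..b]) = 0"
  using c3_le_c2[of n "rev [a..b]"] c2_rev_upto by simp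

lemma hd_rev_upto: "a \<le> b \<Longrightarrow> hd (rev [a..b]) = b"
  by (simp add: hd_rev last_upto)

lemma last_rev_upto: "a \<le> b \<Longrightarrow> last (rev [a..b]) = a"
  by (simp add: last_rev hd_upto)

fun chn :: "(int \<times> int) list \<Rightarrow> bool" where
  "chn ((a,b)#(a',b')#r) = (a' < b \<and> chn ((a',b')#r))"
| "chn _ = True"

fun wk :: "(int \<times> int) list \<Rightarrow> int list" where
  "wk [] = []"
| "wk [(a,b)] = [a..b] @ rev [0..b-1]"
| "wk ((a,b)#(a',b')#r) = [a..b] @ rev [a'+1..b-1] @ wk ((a',b')#r)"

lemma wk_hd_last:
  assumes "\<forall>(a,b)\<in>set P. a < b \<and> -1 \<le> a" "P \<noteq> []"
  shows "wk P \<noteq> [] \<and> hd (wk P) = fst (hd P) \<and> last (wk P) = 0"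
  using assms
proof (induction P rule: wk.induct)
  case 1 then show ?case by simp
next
  case (2 a b)
  then show ?case by (cases "1 \<le> b") (auto simp: hd_upto last_rev_upto last_upto)
next
  case (3 a b a' b' r)
  then show ?case by (auto simp: hd_upto)
qed

lemma wk_counts:
  assumes "\<forall>(a,b)\<in>set P. a < b \<and> -1 \<le> a" "chn P"
  shows "c2 n (wk P) = length (filter (\<lambda>(a,b). a < n \<and> n \<le> b) P) \<and>
         c3 n (wk P) = length (filter (\<lambda>(a,b). a < n \<and> n < b) P)"
  using assms
proof (induction P rule: wk.induct)
  case 1 then show ?case by simp
next
  case (2 a b)
  have d: "[a..b] = [] \<or> rev [0..b-1] = [] \<or> hd (rev [0..b-1]) < last [a..b]"
    using 2 by (cases "1 \<le> b") (auto simp: hd_rev_upto last_upto)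
  show ?case using c2_append_down[OF d, of n] c3_append_down[OF d, of n]
    by (simp add: c2_upto c3_upto c2_rev_upto c3_rev_upto)
next
  case (3 a b a' b' r)
  have ab: "a < b" "a' < b'" "a' < b" "-1 \<le> a'" using 3(2,3) by auto
  have ne: "wk ((a',b')#r) \<noteq> []" and hw: "hd (wk ((a',b')#r)) = a'"
    using wk_hd_last[of "(a',b')#r"] 3(2) by auto
  have d1: "[a..b] = [] \<or> rev [a'+1..b-1] @ wk ((a',b')#r) = [] \<or> hd (rev [a'+1..b-1] @ wk ((a',b')#r)) < last [a..b]"
    using ab ne hw by (cases "a'+1 \<le> b-1") (auto simp: hd_rev_upto last_upto)
  have d2: "rev [a'+1..b-1] = [] \<or> wk ((a',b')#r) = [] \<or> hd (wk ((a',b')#r)) < last (rev [a'+1..b-1])"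
    using ab ne hw by (cases "a'+1 \<le> b-1") (auto simp: last_rev_upto)
  have IH: "c2 n (wk ((a',b')#r)) = length (filter (\<lambda>(a,b). a < n \<and> n \<le> b) ((a',b')#r)) \<and>
         c3 n (wk ((a',b')#r)) = length (filter (\<lambda>(a,b). a < n \<and> n < b) ((a',b')#r))"
    using 3 by auto
  show ?case
    using c2_append_down[OF d1, of n] c3_append_down[OF d1, of n]
      c2_append_down[OF d2, of n] c3_append_down[OF d2, of n] IH
    by (simp add: c2_upto c3_upto c2_rev_upto c3_rev_upto)
qed

lemma wk_stp:
  assumes "\<forall>(a,b)\<in>set P. a < b \<and> -1 \<le> a" "chn P"
  shows "stp (wk P)"
  using assms
proof (induction P rule: wk.induct)
  case 1 then show ?case by simp
next
  case (2 a b)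
  show ?case using 2
    by (cases "1 \<le> b") (auto intro!: stp_append simp: stp_upto stp_rev hd_rev_upto last_upto)
next
  case (3 a b a' b' r)
  have ab: "a < b" "a' < b'" "a' < b" "-1 \<le> a'" using 3(2,3) by auto
  have ne: "wk ((a',b')#r) \<noteq> []" and hw: "hd (wk ((a',b')#r)) = a'"
    using wk_hd_last[of "(a',b')#r"] 3(2) by auto
  have IH: "stp (wk ((a',b')#r))" using 3 by auto
  have s2: "stp (rev [a'+1..b-1] @ wk ((a',b')#r))"
    using ab ne hw IH by (cases "a'+1 \<le> b-1") (auto intro!: stp_append simp: stp_upto stp_rev last_rev_upto)
  show ?case using ab ne hw s2
    by (cases "a'+1 \<le> b-1") (auto intro!: stp_append simp: stp_upto stp_rev last_upto hd_rev_upto)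
qed

lemma wk_set:
  assumes "\<forall>(a,b)\<in>set P. 0 \<le> a \<and> b \<le> M"
  shows "set (wk P) \<subseteq> {0..M}"
  using assms by (induction P rule: wk.induct) auto


lemma c3_le_c2_succ_aux: "c3 n (x#l) \<le> c2 (n+1) l"
proof (induction l arbitrary: x)
  case Nil then show ?case by simp
next
  case (Cons y r)
  have "c3 n (y#r) \<le> c2 (n+1) r" using Cons by blast
  then show ?case unfolding c3_Cons c2_Cons[of _ y] by auto
qed

lemma c3_le_c2_succ: "c3 n l \<le> c2 (n+1) l"
proof (cases l)
  case Nil then show ?thesis by simp
next
  case (Cons x r)
  then show ?thesis using c3_le_c2_succ_aux[of n x r] c2_Cons[of "n+1" x r] by simp
qed

lemma c3_top: "\<forall>x\<in>set l. x \<le> M \<Longrightarrow> c3 M l = 0"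
  by (induction M l rule: c3.induct) auto

lemma c3_pos:
  "stp l \<Longrightarrow> l \<noteq> [] \<Longrightarrow> hd l \<le> n - 1 \<Longrightarrow> c2 (n+1) l > 0 \<Longrightarrow> c3 n l > 0"
proof (induction "length l" arbitrary: l rule: less_induct)
  case less
  obtain x r where l: "l = x # r" using less(3) by (cases l) auto
  have x: "x \<le> n - 1" using less(4) l by simp
  have r: "r \<noteq> []" using less(5) l by auto
  obtain y r' where r': "r = y # r'" using r by (cases r) auto
  have c2r: "c2 (n+1) r > 0" using less(5) x unfolding l c2_Cons by (auto split: if_splits)
  have sr: "stp r" and xy: "\<bar>y - x\<bar> = 1" using less(2) unfolding l r' by auto
  have mono: "c3 n r \<le> c3 n l" unfolding l r' c3_Cons by simp
  show ?case
  proof (cases "y \<le> n - 1")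
    case True
    have "c3 n r > 0" using less(1)[of r] l r' True sr c2r by auto
    then show ?thesis using mono by simp
  next
    case False
    then have yn: "y = n" "x = n - 1" using xy x by auto
    have r'ne: "r' \<noteq> []" using c2r unfolding r' yn by (cases r') auto
    obtain w r'' where r'': "r' = w # r''" using r'ne by (cases r') auto
    have yw: "\<bar>w - y\<bar> = 1" and sw: "stp (w#r'')" using sr unfolding r' r'' by auto
    show ?thesis
    proof (cases "w = n + 1")
      case True then show ?thesis unfolding l r' r'' yn c3_Cons by simp
    next
      case False
      then have wn: "w = n - 1" using yw yn by auto
      have "c2 (n+1) (w#r'') > 0" using c2r unfolding r' r'' yn wn c2_Cons by (auto split: if_splits)
      then have "c3 n (w#r'') > 0" using less(1)[of "w#r''"] l r' r'' sw wn by auto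
      moreover have "c3 n (w#r'') \<le> c3 n l" unfolding l r' r'' c3_Cons by simp
      ultimately show ?thesis by simp
    qed
  qed
qed

lemma stp_nth: "stp h = (\<forall>i. Suc i < length h \<longrightarrow> \<bar>h!Suc i - h!i\<bar> = 1)"
proof (induction h rule: stp.induct)
  case (1 x y r)
  show ?case
  proof
    assume "stp (x#y#r)"
    then show "\<forall>i. Suc i < length (x#y#r) \<longrightarrow> \<bar>(x#y#r)!Suc i - (x#y#r)!i\<bar> = 1"
      using 1 by (auto simp: nth_Cons split: nat.splits)
  next
    assume A: "\<forall>i. Suc i < length (x#y#r) \<longrightarrow> \<bar>(x#y#r)!Suc i - (x#y#r)!i\<bar> = 1"
    then have "\<bar>y - x\<bar> = 1" by (metis One_nat_def Suc_less_eq length_Cons nth_Cons_0 nth_Cons_Suc zero_less_Suc)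
    moreover have "\<forall>i. Suc i < length (y#r) \<longrightarrow> \<bar>(y#r)!Suc i - (y#r)!i\<bar> = 1"
      using A by (metis Suc_less_eq length_Cons nth_Cons_Suc)
    ultimately show "stp (x#y#r)" using 1 by simp
  qed
qed auto


lemma card_split_Suc:
  assumes "\<And>i. P i \<Longrightarrow> i < N"
  shows "card {i. P i} = (if P 0 then 1 else 0) + card {i. P (Suc i)}"
proof -
  have fin: "finite {i. P i}" using assms by (meson finite_nat_set_iff_bounded mem_Collect_eq)
  have fin2: "finite {i. P (Suc i)}" using assms
    by (metis (no_types, lifting) Suc_lessD finite_nat_set_iff_bounded mem_Collect_eq)
  have eq: "{i. P i} = {i::nat. i = 0 \<and> P 0} \<union> Suc ` {i. P (Suc i)}"
  proof (rule set_eqI)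
    fix x show "x \<in> {i. P i} \<longleftrightarrow> x \<in> {i::nat. i = 0 \<and> P 0} \<union> Suc ` {i. P (Suc i)}"
      by (cases x) auto
  qed
  have f1: "finite {i::nat. i = 0 \<and> P 0}" by auto
  have f2: "finite (Suc ` {i. P (Suc i)})" using fin2 by auto
  have dj: "{i::nat. i = 0 \<and> P 0} \<inter> Suc ` {i. P (Suc i)} = {}" by auto
  have "card {i. P i} = card {i::nat. i = 0 \<and> P 0} + card (Suc ` {i. P (Suc i)})"
    unfolding eq using card_Un_disjoint[OF f1 f2 dj] by simp
  also have "card (Suc ` {i. P (Suc i)}) = card {i. P (Suc i)}" by (simp add: card_image)
  also have "card {i::nat. i = 0 \<and> P 0} = (if P 0 then 1 else 0)" by auto
  finally show ?thesis .
qed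

lemma card_uc2: "card {i. Suc i < length h \<and> h!i = n-1 \<and> h!Suc i = n} = c2 n h"
proof (induction n h rule: c2.induct)
  case (1 n x y r)
  have "card {i. Suc i < length (x#y#r) \<and> (x#y#r)!i = n-1 \<and> (x#y#r)!Suc i = n}
     = (if x = n-1 \<and> y = n then 1 else 0) + card {i. Suc i < length (y#r) \<and> (y#r)!i = n-1 \<and> (y#r)!Suc i = n}"
    by (subst card_split_Suc[where N = "length (x#y#r)"]) auto
  then show ?case using 1 by simp
next
  case ("2_1" n) then show ?case by simp
next
  case ("2_2" n x) then show ?case by simp
qed

lemma card_uc3: "card {i. Suc (Suc i) < length h \<and> h!i = n-1 \<and> h!Suc i = n \<and> h!Suc (Suc i) = n+1} = c3 n h"
proof (induction n h rule: c3.induct)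
  case (1 n x y w r)
  have "card {i. Suc (Suc i) < length (x#y#w#r) \<and> (x#y#w#r)!i = n-1 \<and> (x#y#w#r)!Suc i = n \<and> (x#y#w#r)!Suc (Suc i) = n+1}
     = (if x = n-1 \<and> y = n \<and> w = n+1 then 1 else 0) + card {i. Suc (Suc i) < length (y#w#r) \<and> (y#w#r)!i = n-1 \<and> (y#w#r)!Suc i = n \<and> (y#w#r)!Suc (Suc i) = n+1}"
    by (subst card_split_Suc[where N = "length (x#y#w#r)"]) auto
  then show ?case using 1 by simp
qed (auto simp: Suc_less_eq2)


definition goodw :: "nat \<Rightarrow> int list \<Rightarrow> bool" where
  "goodw M h \<longleftrightarrow> length h \<ge> 3 \<and> h!0 = -1 \<and> h!(length h - 1) = -1 \<and>
     (\<forall>i. 1 \<le> i \<and> i \<le> length h - 2 \<longrightarrow> 0 \<le> h!i \<and> h!i \<le> int M) \<and> stp h"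

definition runs' :: "int \<Rightarrow> int list \<Rightarrow> (nat \<times> nat) set" where
  "runs' n h = {(a,b). a \<le> b \<and> b < length h \<and> (\<forall>i. a \<le> i \<and> i \<le> b \<longrightarrow> n \<le> h!i) \<and>
      (a = 0 \<or> \<not> n \<le> h!(a-1)) \<and> (b = length h - 1 \<or> \<not> n \<le> h!(b+1))}"

lemma goodw_range: "goodw M h \<Longrightarrow> i < length h \<Longrightarrow> -1 \<le> h!i \<and> h!i \<le> int M"
proof -
  assume g: "goodw M h" and i: "i < length h"
  consider "i = 0" | "i = length h - 1" | "1 \<le> i \<and> i \<le> length h - 2" using i by linarith
  then show ?thesis using g unfolding goodw_def by cases force+
qed

lemma goodw_step: "goodw M h \<Longrightarrow> Suc i < length h \<Longrightarrow> \<bar>h!Suc i - h!i\<bar> = 1"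
  unfolding goodw_def stp_nth by blast

lemma run_exists:
  assumes g: "goodw M h" and n: "0 \<le> n" and i: "Suc i < length h" and hi: "h!i < n" and hs: "n \<le> h!Suc i"
  shows "\<exists>b. (Suc i, b) \<in> runs' n h \<and> (Suc (Suc i) < length h \<and> n \<le> h!Suc (Suc i) \<longrightarrow> Suc i < b)"
proof -
  define S where "S = {j. Suc i \<le> j \<and> j < length h \<and> h!j < n}"
  have last: "h!(length h - 1) = -1" "length h \<ge> 3" using g unfolding goodw_def by auto
  have inS: "length h - 1 \<in> S" unfolding S_def using i last n by auto
  define c where "c = (LEAST j. j \<in> S)"
  have cS: "c \<in> S" unfolding c_def using inS by (rule LeastI)
  have cmin: "\<And>j. j \<in> S \<Longrightarrow> c \<le> j" unfolding c_def by (rule Least_le)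
  have c1: "Suc i < c" using cS hs unfolding S_def by (auto simp: le_less)
  define b where "b = c - 1"
  have bc: "Suc b = c" using c1 unfolding b_def by simp
  have m1: "Suc i \<le> b" using c1 bc by simp
  have m2: "b < length h" using cS bc unfolding S_def by simp
  have m3: "\<forall>l. Suc i \<le> l \<and> l \<le> b \<longrightarrow> n \<le> h!l"
  proof (intro allI impI)
    fix l assume L: "Suc i \<le> l \<and> l \<le> b"
    then have "l \<notin> S" using cmin bc by (metis not_less_eq_eq)
    then show "n \<le> h!l" using L m2 unfolding S_def by auto
  qed
  have m4: "b = length h - 1 \<or> \<not> n \<le> h!(b+1)" using cS bc unfolding S_def by simp
  have mem: "(Suc i, b) \<in> runs' n h"
    unfolding runs'_def using m1 m2 m3 m4 hi by simp
  moreover have "Suc (Suc i) < length h \<and> n \<le> h!Suc (Suc i) \<longrightarrow> Suc i < b"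
  proof
    assume A: "Suc (Suc i) < length h \<and> n \<le> h!Suc (Suc i)"
    have "c \<noteq> Suc (Suc i)" using cS A unfolding S_def by auto
    then show "Suc i < b" using c1 bc by simp
  qed
  ultimately show ?thesis by blast
qed

lemma runs'_a: assumes g: "goodw M h" "0 \<le> n" and r: "(a,b) \<in> runs' n h"
  shows "a \<noteq> 0 \<and> h!(a-1) = n-1 \<and> h!a = n"
proof -
  have r': "a \<le> b" "b < length h" "\<forall>i. a \<le> i \<and> i \<le> b \<longrightarrow> n \<le> h!i" "a = 0 \<or> \<not> n \<le> h!(a-1)"
    using r unfolding runs'_def by auto
  have a0: "a \<noteq> 0" using r' g unfolding goodw_def by force
  have ha: "n \<le> h!a" using r' by auto
  have st: "\<bar>h!Suc (a-1) - h!(a-1)\<bar> = 1" using goodw_step[OF g(1), of "a-1"] a0 r' by simp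
  then show ?thesis using a0 ha r' by auto
qed

lemma runs'_inj: assumes g: "goodw M h" "0 \<le> n" shows "inj_on (\<lambda>(a,b). a - 1) (runs' n h)"
proof (rule inj_onI, clarify)
  fix a b a' b' assume r: "(a,b) \<in> runs' n h" and r2: "(a',b') \<in> runs' n h" and e: "a - 1 = a' - 1"
  have "a = a'" using runs'_a[OF g r] runs'_a[OF g r2] e by auto
  moreover have "b = b'"
  proof (rule ccontr)
    assume "b \<noteq> b'"
    then consider "b < b'" | "b' < b" by linarith
    then show False
    proof cases
      case 1
      have A: "a \<le> b" "b = length h - 1 \<or> \<not> n \<le> h!(b+1)" using r unfolding runs'_def by auto
      have B: "b' < length h" "\<forall>i. a' \<le> i \<and> i \<le> b' \<longrightarrow> n \<le> h!i" using r2 unfolding runs'_def by auto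
      have "n \<le> h!(b+1)" using B(2) A(1) 1 \<open>a = a'\<close> by auto
      then show False using A(2) B(1) 1 by auto
    next
      case 2
      have A: "a' \<le> b'" "b' = length h - 1 \<or> \<not> n \<le> h!(b'+1)" using r2 unfolding runs'_def by auto
      have B: "b < length h" "\<forall>i. a \<le> i \<and> i \<le> b \<longrightarrow> n \<le> h!i" using r unfolding runs'_def by auto
      have "n \<le> h!(b'+1)" using B(2) A(1) 2 \<open>a = a'\<close> by auto
      then show False using A(2) B(1) 2 by auto
    qed
  qed
  ultimately show "a = a' \<and> b = b'" by simp
qed


lemma card_runs':
  assumes g: "goodw M h" and n: "0 \<le> n"
  shows "card (runs' n h) = c2 n h" "card {(a,b) \<in> runs' n h. a < b} = c3 n h"
proof -
  let ?f = "\<lambda>(a::nat,b::nat). a - 1"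
  have inj: "inj_on ?f (runs' n h)" by (rule runs'_inj[OF g n])
  have img2: "?f ` runs' n h = {i. Suc i < length h \<and> h!i = n-1 \<and> h!Suc i = n}"
  proof (rule set_eqI, rule iffI)
    fix i assume "i \<in> ?f ` runs' n h"
    then obtain a b where r: "(a,b) \<in> runs' n h" and i: "i = a - 1" by auto
    have "a \<noteq> 0 \<and> h!(a-1) = n-1 \<and> h!a = n" by (rule runs'_a[OF g n r])
    moreover have "a < length h" using r unfolding runs'_def by auto
    ultimately show "i \<in> {i. Suc i < length h \<and> h!i = n-1 \<and> h!Suc i = n}" using i by auto
  next
    fix i assume "i \<in> {i. Suc i < length h \<and> h!i = n-1 \<and> h!Suc i = n}"
    then have i: "Suc i < length h" "h!i = n-1" "h!Suc i = n" by auto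
    obtain b where "(Suc i, b) \<in> runs' n h" using run_exists[OF g n i(1)] i by auto
    moreover have "i = ?f (Suc i, b)" by simp
    ultimately show "i \<in> ?f ` runs' n h" by (rule rev_image_eqI)
  qed
  show "card (runs' n h) = c2 n h"
    using card_image[OF inj] img2 card_uc2[of h n] by simp
  have inj3: "inj_on ?f {(a,b) \<in> runs' n h. a < b}" using inj by (rule inj_on_subset) auto
  have img3: "?f ` {(a,b) \<in> runs' n h. a < b} = {i. Suc (Suc i) < length h \<and> h!i = n-1 \<and> h!Suc i = n \<and> h!Suc (Suc i) = n+1}"
  proof (rule set_eqI, rule iffI)
    fix i assume "i \<in> ?f ` {(a,b) \<in> runs' n h. a < b}"
    then obtain a b where r: "(a,b) \<in> runs' n h" and ab: "a < b" and i: "i = a - 1" by auto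
    have A: "a \<noteq> 0 \<and> h!(a-1) = n-1 \<and> h!a = n" by (rule runs'_a[OF g n r])
    have B: "b < length h" "\<forall>j. a \<le> j \<and> j \<le> b \<longrightarrow> n \<le> h!j" using r unfolding runs'_def by auto
    have "n \<le> h!Suc a" using B(2) ab by auto
    moreover have "\<bar>h!Suc a - h!a\<bar> = 1" using goodw_step[OF g, of a] ab B(1) by simp
    ultimately have "h!Suc a = n+1" using A by auto
    then show "i \<in> {i. Suc (Suc i) < length h \<and> h!i = n-1 \<and> h!Suc i = n \<and> h!Suc (Suc i) = n+1}"
      using i A ab B(1) by auto
  next
    fix i assume "i \<in> {i. Suc (Suc i) < length h \<and> h!i = n-1 \<and> h!Suc i = n \<and> h!Suc (Suc i) = n+1}"
    then have i: "Suc (Suc i) < length h" "h!i = n-1" "h!Suc i = n" "h!Suc (Suc i) = n+1" by auto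
    obtain b where "(Suc i, b) \<in> runs' n h" "Suc i < b" using run_exists[OF g n, of i] i by auto
    then have "(Suc i, b) \<in> {(a,b) \<in> runs' n h. a < b}" by simp
    moreover have "i = ?f (Suc i, b)" by simp
    ultimately show "i \<in> ?f ` {(a,b) \<in> runs' n h. a < b}" by (rule rev_image_eqI)
  qed
  show "card {(a,b) \<in> runs' n h. a < b} = c3 n h"
    using card_image[OF inj3] img3 card_uc3[of h n] by simp
qed

lemma mem_zimg:
  fixes z :: "int \<Rightarrow> real"
  assumes z: "strict_mono_on {-1..int M} z" and x: "-1 \<le> x" "x \<le> int M"
  shows "z x \<in> z ` {int n..int M} \<longleftrightarrow> int n \<le> x"
proof
  assume "z x \<in> z ` {int n..int M}"
  then obtain j where j: "j \<in> {int n..int M}" "z x = z j" by auto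
  have "inj_on z {-1..int M}" using z by (rule strict_mono_on_imp_inj_on)
  then have "x = j" using j x by (auto dest: inj_onD)
  then show "int n \<le> x" using j by simp
qed (use x in auto)

lemma runs_eq:
  fixes z :: "int \<Rightarrow> real"
  assumes z: "strict_mono_on {-1..int M} z" and g: "goodw M h"
  shows "runs z M (map z h) n = runs' (int n) h"
proof -
  have key: "\<And>i. i < length h \<Longrightarrow> (map z h)!i \<in> z ` {int n..int M} \<longleftrightarrow> int n \<le> h!i"
    using mem_zimg[OF z] goodw_range[OF g] by simp
  show ?thesis
    unfolding runs_def runs'_def
  proof (rule set_eqI, clarify, rule iffI)
    fix a b
    assume A: "(a, b) \<in> {(a, b). a \<le> b \<and> b < length (map z h) \<and>
             (\<forall>i. a \<le> i \<and> i \<le> b \<longrightarrow> map z h ! i \<in> z ` {int n..int M}) \<and>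
             (a = 0 \<or> map z h ! (a - 1) \<notin> z ` {int n..int M}) \<and>
             (b = length (map z h) - 1 \<or> map z h ! (b + 1) \<notin> z ` {int n..int M})}"
    then have A: "a \<le> b" "b < length h" "\<forall>i. a \<le> i \<and> i \<le> b \<longrightarrow> map z h ! i \<in> z ` {int n..int M}"
      "a = 0 \<or> map z h ! (a - 1) \<notin> z ` {int n..int M}"
      "b = length h - 1 \<or> map z h ! (b + 1) \<notin> z ` {int n..int M}" by auto
    have 3: "\<forall>i. a \<le> i \<and> i \<le> b \<longrightarrow> int n \<le> h!i" using A(1-3) key by auto
    have 4: "a = 0 \<or> \<not> int n \<le> h!(a-1)" using A(1,2,4) key[of "a-1"] by auto
    have 5: "b = length h - 1 \<or> \<not> int n \<le> h!(b+1)"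
      using A(2,5) key[of "b+1"] by (cases "b = length h - 1") auto
    show "(a, b) \<in> {(a, b). a \<le> b \<and> b < length h \<and> (\<forall>i. a \<le> i \<and> i \<le> b \<longrightarrow> int n \<le> h ! i) \<and>
             (a = 0 \<or> \<not> int n \<le> h ! (a - 1)) \<and> (b = length h - 1 \<or> \<not> int n \<le> h ! (b + 1))}"
      using A(1,2) 3 4 5 by simp
  next
    fix a b
    assume A: "(a, b) \<in> {(a, b). a \<le> b \<and> b < length h \<and> (\<forall>i. a \<le> i \<and> i \<le> b \<longrightarrow> int n \<le> h ! i) \<and>
             (a = 0 \<or> \<not> int n \<le> h ! (a - 1)) \<and> (b = length h - 1 \<or> \<not> int n \<le> h ! (b + 1))}"
    then have A: "a \<le> b" "b < length h" "\<forall>i. a \<le> i \<and> i \<le> b \<longrightarrow> int n \<le> h!i"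
      "a = 0 \<or> \<not> int n \<le> h!(a-1)" "b = length h - 1 \<or> \<not> int n \<le> h!(b+1)" by auto
    have 3: "\<forall>i. a \<le> i \<and> i \<le> b \<longrightarrow> map z h ! i \<in> z ` {int n..int M}" using A(1-3) key by auto
    have 4: "a = 0 \<or> map z h ! (a - 1) \<notin> z ` {int n..int M}" using A(1,2,4) key[of "a-1"] by auto
    have 5: "b = length h - 1 \<or> map z h ! (b + 1) \<notin> z ` {int n..int M}"
      using A(2,5) key[of "b+1"] by (cases "b = length h - 1") auto
    show "(a, b) \<in> {(a, b). a \<le> b \<and> b < length (map z h) \<and>
             (\<forall>i. a \<le> i \<and> i \<le> b \<longrightarrow> map z h ! i \<in> z ` {int n..int M}) \<and>
             (a = 0 \<or> map z h ! (a - 1) \<notin> z ` {int n..int M}) \<and>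
             (b = length (map z h) - 1 \<or> map z h ! (b + 1) \<notin> z ` {int n..int M})}"
      using A(1,2) 3 4 5 by simp
  qed
qed


lemma goodw_scat:
  fixes z :: "int \<Rightarrow> real"
  assumes g: "goodw M h"
  shows "scat_seq z M (map z h)"
proof -
  have g': "length h \<ge> 3" "h!0 = -1" "h!(length h - 1) = -1"
    "\<forall>i. 1 \<le> i \<and> i \<le> length h - 2 \<longrightarrow> 0 \<le> h!i \<and> h!i \<le> int M" using g unfolding goodw_def by auto
  have adj: "\<exists>j \<in> {-1..int M - 1}. {map z h ! i, map z h ! (i+1)} = {z j, z (j+1)}" if i: "i < length h - 1" for i
  proof -
    have st: "\<bar>h!Suc i - h!i\<bar> = 1" using goodw_step[OF g, of i] i by simp
    have r1: "-1 \<le> h!i \<and> h!i \<le> int M" and r2: "-1 \<le> h!Suc i \<and> h!Suc i \<le> int M"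
      using goodw_range[OF g, of i] goodw_range[OF g, of "Suc i"] i by auto
    show ?thesis
    proof (cases "h!Suc i = h!i + 1")
      case True
      then show ?thesis using i r1 r2 by (intro bexI[of _ "h!i"]) auto
    next
      case False
      then have "h!i = h!Suc i + 1" using st by auto
      then show ?thesis using i r1 r2 by (intro bexI[of _ "h!Suc i"]) auto
    qed
  qed
  have l0: "0 < length h" "length h - 1 < length h" using g'(1) by auto
  have e0: "map z h ! 0 = z (-1)" "map z h ! (length (map z h) - 1) = z (-1)"
    using nth_map[OF l0(1), of z] nth_map[OF l0(2), of z] g'(2,3) by auto
  have int: "\<forall>i. 1 \<le> i \<and> i \<le> length (map z h) - 2 \<longrightarrow> map z h ! i \<in> z ` {0..int M}"
    using g'(1,4) by auto
  show ?thesis unfolding scat_seq_def using g' adj e0 int by auto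
qed

lemma scat_goodw:
  fixes z :: "int \<Rightarrow> real"
  assumes z: "strict_mono_on {-1..int M} z" and s: "scat_seq z M p"
  shows "\<exists>h. goodw M h \<and> p = map z h"
proof -
  have inj: "inj_on z {-1..int M}" using z by (rule strict_mono_on_imp_inj_on)
  have s': "length p \<ge> 3" "p!0 = z (-1)" "p!(length p - 1) = z (-1)"
     "\<forall>i. 1 \<le> i \<and> i \<le> length p - 2 \<longrightarrow> p!i \<in> z ` {0..int M}"
     "\<forall>i < length p - 1. \<exists>j \<in> {-1..int M - 1}. {p!i, p!(i+1)} = {z j, z (j+1)}"
    using s unfolding scat_seq_def by auto
  define g where "g = the_inv_into {-1..int M} z"
  define h where "h = map g p"
  have inimg: "p!i \<in> z ` {-1..int M}" if "i < length p" for i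
  proof -
    have il: "i < length p" by (rule that)
    consider "i = 0" | "i = length p - 1" | "1 \<le> i \<and> i \<le> length p - 2" using il by linarith
    then show ?thesis
    proof cases
      case 1 then show ?thesis using s' by auto
    next
      case 2 then show ?thesis using s' by auto
    next
      case 3 then show ?thesis using s'(4) by fastforce
    qed
  qed
  have zg: "z (g x) = x" if "x \<in> z ` {-1..int M}" for x
    unfolding g_def using f_the_inv_into_f[OF inj that] .
  have gr: "g x \<in> {-1..int M}" if "x \<in> z ` {-1..int M}" for x
    unfolding g_def using the_inv_into_into[OF inj that subset_refl] .
  have gz: "g (z x) = x" if "x \<in> {-1..int M}" for x
    unfolding g_def using the_inv_into_f_f[OF inj that] .
  have p: "p = map z h" unfolding h_def
    by (rule nth_equalityI) (auto simp: zg inimg)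
  have lh: "length h = length p" unfolding h_def by simp
  have hnth: "h!i = g (p!i)" if "i < length p" for i unfolding h_def using that by simp
  have stp: "stp h" unfolding stp_nth
  proof (intro allI impI)
    fix i assume i: "Suc i < length h"
    have "i < length p - 1" using i lh by simp
    then obtain j where j: "j \<in> {-1..int M - 1}" "{p!i, p!(i+1)} = {z j, z (j+1)}" using s'(5) by blast
    have jj: "j \<in> {-1..int M}" "j + 1 \<in> {-1..int M}" using j(1) by auto
    have ne: "z j \<noteq> z (j+1)" using inj jj by (metis inj_onD add_cancel_left_right one_neq_zero)
    have "(p!i = z j \<and> p!(i+1) = z (j+1)) \<or> (p!i = z (j+1) \<and> p!(i+1) = z j)"
      using j(2) ne by (auto simp: doubleton_eq_iff)
    then show "\<bar>h!Suc i - h!i\<bar> = 1"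
      using hnth[of i] hnth[of "Suc i"] i lh gz jj by auto
  qed
  have gw: "goodw M h" unfolding goodw_def
  proof (intro conjI allI impI)
    show "3 \<le> length h" using s' lh by simp
    have "p \<noteq> []" using s'(1) by auto
    then show "h!0 = -1" using hnth[of 0] s' gz by auto
    show "h!(length h - 1) = -1" using hnth[of "length p - 1"] s' gz lh by auto
    show "stp h" by (rule stp)
  next
    fix i assume i: "1 \<le> i \<and> i \<le> length h - 2"
    then obtain x where x: "x \<in> {0..int M}" "p!i = z x" using s'(4) lh by auto
    have "h!i = x" using hnth[of i] i lh x s' gz by auto
    then show "0 \<le> h!i" "h!i \<le> int M" using x by auto
  qed
  show ?thesis using gw p by blast
qed


fun ext :: "nat \<Rightarrow> int \<Rightarrow> (int \<times> int) list \<Rightarrow> (int \<times> int) list" where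
  "ext r d [] = []"
| "ext r d ((a,b)#L) = (if 0 < r \<and> b = d then (a, d+1) # ext (r-1) d L else (a,b) # ext r d L)"

lemma ext_props:
  assumes "\<forall>(a,b)\<in>set L. a < b \<and> b \<le> d" "r \<le> length (filter (\<lambda>(a,b). b = d) L)"
  shows "(\<forall>n. length (filter (\<lambda>(a,b). a < n \<and> n \<le> b) (ext r d L)) = length (filter (\<lambda>(a,b). a < n \<and> n \<le> b) L) + (if n = d+1 then r else 0)) \<and>
    (\<forall>n. length (filter (\<lambda>(a,b). a < n \<and> n < b) (ext r d L)) = length (filter (\<lambda>(a,b). a < n \<and> n < b) L) + (if n = d then r else 0)) \<and>
    map fst (ext r d L) = map fst L \<and>
    (\<forall>(a,b)\<in>set (ext r d L). a < b \<and> b \<le> d + 1)"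
  using assms
proof (induction L arbitrary: r)
  case Nil
  then show ?case by simp
next
  case (Cons x L)
  obtain a b where x: "x = (a,b)" by (cases x)
  have ab: "a < b" "b \<le> d" using Cons.prems x by auto
  have LL: "\<forall>(a,b)\<in>set L. a < b \<and> b \<le> d" using Cons.prems by auto
  show ?case
  proof (cases "0 < r \<and> b = d")
    case e: True
    have rr: "r - 1 \<le> length (filter (\<lambda>(a,b). b = d) L)" using Cons.prems(2) x e by auto
    note IH = Cons.IH[OF LL rr]
    have r1: "r = Suc (r - 1)" using e by simp
    show ?thesis
    proof (intro conjI allI)
      fix n
      have i1: "length (filter (\<lambda>(a,b). a < n \<and> n \<le> b) (ext (r-1) d L)) = length (filter (\<lambda>(a,b). a < n \<and> n \<le> b) L) + (if n = d+1 then r-1 else 0)"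
        using IH by blast
      show "length (filter (\<lambda>(a,b). a < n \<and> n \<le> b) (ext r d (x#L))) = length (filter (\<lambda>(a,b). a < n \<and> n \<le> b) (x#L)) + (if n = d+1 then r else 0)"
        using i1 ab e x r1 by (cases "n = d+1"; cases "n = d") auto
    next
      fix n
      have i1: "length (filter (\<lambda>(a,b). a < n \<and> n < b) (ext (r-1) d L)) = length (filter (\<lambda>(a,b). a < n \<and> n < b) L) + (if n = d then r-1 else 0)"
        using IH by blast
      show "length (filter (\<lambda>(a,b). a < n \<and> n < b) (ext r d (x#L))) = length (filter (\<lambda>(a,b). a < n \<and> n < b) (x#L)) + (if n = d then r else 0)"
        using i1 ab e x r1 by (cases "n = d+1"; cases "n = d") auto
    qed (use IH ab e x in auto)
  next
    case n: False
    have rr: "r \<le> length (filter (\<lambda>(a,b). b = d) L)" using Cons.prems(2) x n by (auto split: if_splits)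
    note IH = Cons.IH[OF LL rr]
    have ex: "ext r d (x#L) = (a,b) # ext r d L" using n x by auto
    show ?thesis
    proof (intro conjI allI)
      fix n
      have i1: "length (filter (\<lambda>(a,b). a < n \<and> n \<le> b) (ext r d L)) = length (filter (\<lambda>(a,b). a < n \<and> n \<le> b) L) + (if n = d+1 then r else 0)"
        using IH by blast
      show "length (filter (\<lambda>(a,b). a < n \<and> n \<le> b) (ext r d (x#L))) = length (filter (\<lambda>(a,b). a < n \<and> n \<le> b) (x#L)) + (if n = d+1 then r else 0)"
        unfolding ex using i1 ab x by (cases "n = d+1"; cases "n = d") auto
    next
      fix n
      have i1: "length (filter (\<lambda>(a,b). a < n \<and> n < b) (ext r d L)) = length (filter (\<lambda>(a,b). a < n \<and> n < b) L) + (if n = d then r else 0)"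
        using IH by blast
      show "length (filter (\<lambda>(a,b). a < n \<and> n < b) (ext r d (x#L))) = length (filter (\<lambda>(a,b). a < n \<and> n < b) (x#L)) + (if n = d then r else 0)"
        unfolding ex using i1 ab x by (cases "n = d+1"; cases "n = d") auto
    qed (use IH ab ex x in auto)
  qed
qed


definition f2 :: "int \<Rightarrow> (int \<times> int) list \<Rightarrow> nat" where
  "f2 n P = length (filter (\<lambda>(a,b). a < n \<and> n \<le> b) P)"
definition f3 :: "int \<Rightarrow> (int \<times> int) list \<Rightarrow> nat" where
  "f3 n P = length (filter (\<lambda>(a,b). a < n \<and> n < b) P)"

lemma f2_Cons: "f2 n ((a,b)#P) = (if a < n \<and> n \<le> b then 1 else 0) + f2 n P"
  by (simp add: f2_def)
lemma f3_Cons: "f3 n ((a,b)#P) = (if a < n \<and> n < b then 1 else 0) + f3 n P"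
  by (simp add: f3_def)
lemma f2_app: "f2 n (P @ Q) = f2 n P + f2 n Q" by (simp add: f2_def)
lemma f3_app: "f3 n (P @ Q) = f3 n P + f3 n Q" by (simp add: f3_def)
lemma f2_rep: "f2 n (replicate s (a,b)) = (if a < n \<and> n \<le> b then s else 0)"
  by (induction s) (auto simp: f2_def)
lemma f3_rep: "f3 n (replicate s (a,b)) = (if a < n \<and> n < b then s else 0)"
  by (induction s) (auto simp: f3_def)

lemma sorted_rep: "sorted_wrt (\<lambda>x y. fst y \<le> fst x) (replicate s (x::int\<times>int))"
  by (induction s) auto

lemma build:
  fixes K Bv :: "nat \<Rightarrow> int" and D :: nat
  assumes "d \<le> D" "\<forall>n \<le> D. 1 \<le> K n" "K 0 = 1" "\<forall>n < D. 1 \<le> Bv n \<and> Bv n \<le> K n \<and> Bv n \<le> K (Suc n)"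
  shows "\<exists>L. (\<forall>(a,b)\<in>set L. 0 \<le> a \<and> a < b \<and> b \<le> int d) \<and> sorted_wrt (\<lambda>x y. fst y \<le> fst x) L \<and>
   (\<forall>n::nat. int (f2 (int n) ((-1, int d)#L)) = (if n \<le> d then K n else 0)) \<and>
   (\<forall>n::nat. int (f3 (int n) ((-1, int d)#L)) = (if n < d then Bv n else 0))"
  using assms(1)
proof (induction d)
  case 0
  show ?case
    by (rule exI[of _ "[]"]) (auto simp: f2_def f3_def assms(3))
next
  case (Suc d)
  then obtain L where L1: "\<forall>(a,b)\<in>set L. 0 \<le> a \<and> a < b \<and> b \<le> int d"
    and L2: "sorted_wrt (\<lambda>x y. fst y \<le> fst x) L"
    and L3: "\<forall>n::nat. int (f2 (int n) ((-1, int d)#L)) = (if n \<le> d then K n else 0)"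
    and L4: "\<forall>n::nat. int (f3 (int n) ((-1, int d)#L)) = (if n < d then Bv n else 0)" by auto
  have dD: "d < D" using Suc by simp
  have B: "1 \<le> Bv d" "Bv d \<le> K d" "Bv d \<le> K (Suc d)" using assms(4) dD by auto
  have Ld: "\<forall>(a,b)\<in>set L. a < b \<and> b \<le> int d" using L1 by auto
  have fE: "filter (\<lambda>(a,b). a < int d \<and> int d \<le> b) L = filter (\<lambda>(a,b). b = int d) L"
    by (rule filter_cong) (use Ld in auto)
  have E: "int (length (filter (\<lambda>(a,b). b = int d) L)) = K d - 1"
    using L3[rule_format, of d] fE by (simp add: f2_Cons f2_def)
  define r where "r = nat (Bv d - 1)"
  define s where "s = nat (K (Suc d) - Bv d)"
  have rE: "r \<le> length (filter (\<lambda>(a,b). b = int d) L)" using E B unfolding r_def by linarith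
  note X = ext_props[OF Ld rE]
  define L' where "L' = replicate s (int d, int d + 1) @ ext r (int d) L"
  have c2: "int (f2 (int n) ((-1, int (Suc d))#L')) = (if n \<le> Suc d then K n else 0)" for n :: nat
  proof -
    have e1: "f2 (int n) (ext r (int d) L) = f2 (int n) L + (if int n = int d + 1 then r else 0)"
      using X unfolding f2_def by blast
    have old: "int (f2 (int n) ((-1, int d)#L)) = (if n \<le> d then K n else 0)" using L3 by blast
    have new: "f2 (int n) ((-1, int (Suc d))#L') = (if int n \<le> int d + 1 then 1 else 0) + (if int d < int n \<and> int n \<le> int d + 1 then s else 0) + f2 (int n) (ext r (int d) L)"
      unfolding L'_def by (simp add: f2_Cons f2_app f2_rep)
    consider "n \<le> d" | "n = Suc d" | "Suc d < n" by linarith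
    then show ?thesis
    proof cases
      case 1 then show ?thesis using new e1 old by (simp add: f2_Cons)
    next
      case 2
      have "f2 (int n) L = 0" using old 2 by (simp add: f2_Cons)
      then show ?thesis using new e1 2 B unfolding r_def s_def by simp
    next
      case 3
      have "f2 (int n) L = 0" using old 3 by (simp add: f2_Cons)
      then show ?thesis using new e1 3 by simp
    qed
  qed
  have c3: "int (f3 (int n) ((-1, int (Suc d))#L')) = (if n < Suc d then Bv n else 0)" for n :: nat
  proof -
    have e1: "f3 (int n) (ext r (int d) L) = f3 (int n) L + (if int n = int d then r else 0)"
      using X unfolding f3_def by blast
    have old: "int (f3 (int n) ((-1, int d)#L)) = (if n < d then Bv n else 0)" using L4 by blast
    have new: "f3 (int n) ((-1, int (Suc d))#L') = (if int n < int d + 1 then 1 else 0) + f3 (int n) (ext r (int d) L)"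
      unfolding L'_def by (simp add: f3_Cons f3_app f3_rep)
    consider "n < d" | "n = d" | "d < n" by linarith
    then show ?thesis
    proof cases
      case 1 then show ?thesis using new e1 old by (simp add: f3_Cons)
    next
      case 2
      have "f3 (int n) L = 0" using old 2 by (simp add: f3_Cons)
      then show ?thesis using new e1 2 B unfolding r_def by simp
    next
      case 3
      have "f3 (int n) L = 0" using old 3 by (simp add: f3_Cons)
      then show ?thesis using new e1 3 by simp
    qed
  qed
  have mf: "map fst (ext r (int d) L) = map fst L" using X by blast
  have bnd: "\<forall>(a,b)\<in>set (ext r (int d) L). a < b \<and> b \<le> int d + 1" using X by blast
  have afst: "0 \<le> a \<and> a \<le> int d" if "(a,b) \<in> set (ext r (int d) L)" for a b
  proof -
    have "a \<in> set (map fst (ext r (int d) L))" using that by force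
    then have "a \<in> fst ` set L" using mf by (metis list.set_map)
    then show ?thesis using L1 by auto
  qed
  have sL': "set L' \<subseteq> insert (int d, int d + 1) (set (ext r (int d) L))"
    unfolding L'_def by auto
  have b1: "\<forall>(a,b)\<in>set L'. 0 \<le> a \<and> a < b \<and> b \<le> int (Suc d)"
  proof (intro ballI, clarify)
    fix a b assume ab: "(a,b) \<in> set L'"
    show "0 \<le> a \<and> a < b \<and> b \<le> int (Suc d)"
    proof (cases "(a,b) = (int d, int d + 1)")
      case True then show ?thesis by simp
    next
      case False
      then have m: "(a,b) \<in> set (ext r (int d) L)" using ab sL' by blast
      show ?thesis using afst[OF m] bnd m by auto
    qed
  qed
  have srt_ext: "sorted_wrt (\<lambda>x y. fst y \<le> fst x) (ext r (int d) L)"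
  proof -
    have "sorted_wrt (\<lambda>a b. b \<le> a) (map fst L)" using L2 by (simp add: sorted_wrt_map)
    then have "sorted_wrt (\<lambda>a b. b \<le> a) (map fst (ext r (int d) L))" using mf by simp
    then show ?thesis by (simp add: sorted_wrt_map)
  qed
  have b2: "sorted_wrt (\<lambda>x y. fst y \<le> fst x) L'"
  proof -
    have cr: "\<forall>x\<in>set (replicate s (int d, int d + 1)). \<forall>y\<in>set (ext r (int d) L). fst y \<le> fst x"
    proof (intro ballI)
      fix x y assume x: "x \<in> set (replicate s (int d, int d + 1))" and y: "y \<in> set (ext r (int d) L)"
      obtain a b where yy: "y = (a,b)" by (cases y)
      have "fst x = int d" using x by simp
      then show "fst y \<le> fst x" using afst[of a b] y yy by simp
    qed
    show ?thesis unfolding L'_def sorted_wrt_append using sorted_rep srt_ext cr by blast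
  qed
  show ?case using b1 b2 c2 c3 by blast
qed


lemma chn_sorted:
  assumes "\<forall>(a,b)\<in>set L. a < b" "sorted_wrt (\<lambda>x y. fst y \<le> fst x) L" "\<forall>(a,b)\<in>set L. a < b0"
  shows "chn ((a0,b0)#L)"
  using assms
proof (induction L arbitrary: a0 b0)
  case Nil then show ?case by simp
next
  case (Cons x L)
  obtain a b where x: "x = (a,b)" by (cases x)
  have "\<forall>(a',b')\<in>set L. a' < b"
  proof (intro ballI, clarify)
    fix a' b' assume "(a',b') \<in> set L"
    then have "a' \<le> a" using Cons.prems(2) x by fastforce
    then show "a' < b" using Cons.prems(1) x by auto
  qed
  then have "chn ((a,b)#L)" using Cons x by auto
  then show ?case using Cons.prems(3) x by simp
qed

lemma goodw_walk:
  assumes L1: "\<forall>(a,b)\<in>set L. 0 \<le> a \<and> a < b \<and> b \<le> int D" and L2: "sorted_wrt (\<lambda>x y. fst y \<le> fst x) L"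
    and DM: "D \<le> M"
  shows "goodw M (wk ((-1, int D)#L) @ [-1])"
    "c2 n (wk ((-1, int D)#L) @ [-1]) = f2 n ((-1, int D)#L)"
    "c3 n (wk ((-1, int D)#L) @ [-1]) = f3 n ((-1, int D)#L)"
proof -
  let ?P = "(-1, int D)#L"
  have V: "\<forall>(a,b)\<in>set ?P. a < b \<and> -1 \<le> a" using L1 by auto
  have C: "chn ?P" by (rule chn_sorted) (use L1 L2 in auto)
  have HL: "wk ?P \<noteq> [] \<and> hd (wk ?P) = -1 \<and> last (wk ?P) = 0" using wk_hd_last[OF V] by simp
  have d: "wk ?P = [] \<or> [-1] = [] \<or> hd [-1] < last (wk ?P)" using HL by simp
  show "c2 n (wk ?P @ [-1]) = f2 n ?P" "c3 n (wk ?P @ [-1]) = f3 n ?P"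
    using c2_append_down[OF d] c3_append_down[OF d] wk_counts[OF V C, of n] by (simp_all add: f2_def f3_def)
  define T where "T = tl (wk ?P)"
  have W: "wk ?P = -1 # T" using HL unfolding T_def by (cases "wk ?P") auto
  have Tset: "set T \<subseteq> {0..int M}"
  proof (cases L)
    case Nil
    have "wk ?P = [-1..int D] @ rev [0..int D - 1]" using Nil by simp
    also have "[-1..int D] = -1 # [0..int D]" by (simp add: upto_rec1)
    finally have "T = [0..int D] @ rev [0..int D - 1]" unfolding T_def by simp
    then show ?thesis using DM by auto
  next
    case (Cons x r)
    obtain a' b' where x: "x = (a',b')" by (cases x)
    have "wk ?P = [-1..int D] @ rev [a'+1..int D - 1] @ wk L" using Cons x by simp
    also have "[-1..int D] = -1 # [0..int D]" by (simp add: upto_rec1)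
    finally have "T = [0..int D] @ rev [a'+1..int D - 1] @ wk L" unfolding T_def by simp
    moreover have "set (wk L) \<subseteq> {0..int M}" by (rule wk_set) (use L1 DM in auto)
    moreover have "0 \<le> a'" using L1 Cons x by auto
    ultimately show ?thesis using DM by auto
  qed
  have Tne: "T \<noteq> []"
  proof -
    have "\<exists>X. T = [0..int D] @ X"
      using W by (cases L) (auto simp: upto_rec1[of "-1"] split: prod.splits)
    then show ?thesis by auto
  qed
  have h: "wk ?P @ [-1] = -1 # (T @ [-1])" using W by simp
  show "goodw M (wk ?P @ [-1])"
    unfolding goodw_def h
  proof (intro conjI allI impI)
    show "3 \<le> length (-1 # (T @ [-1]))" using Tne by (cases T) auto
    show "(-1 # (T @ [-1]))!0 = -1" by simp
    show "(-1 # (T @ [-1]))!(length (-1 # (T @ [-1])) - 1) = -1" by (simp add: nth_append)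
    show "stp (-1 # (T @ [-1]))"
      using stp_append[of "wk ?P" "[-1]"] wk_stp[OF V C] HL h by simp
  next
    fix i assume i: "1 \<le> i \<and> i \<le> length (-1 # (T @ [-1])) - 2"
    then have "(-1 # (T @ [-1]))!i = T!(i-1)" "i - 1 < length T"
      by (auto simp: nth_Cons' nth_append)
    then have "(-1 # (T @ [-1]))!i \<in> set T" by simp
    then show "0 \<le> (-1 # (T @ [-1]))!i" "(-1 # (T @ [-1]))!i \<le> int M" using Tset by auto
  qed
qed


lemma kappa_nth: "n < M + 1 \<Longrightarrow> kappa z M p ! n = int (card (runs z M p n))"
  unfolding kappa_def by (simp del: upt_Suc)
lemma beta_nth: "n < M + 1 \<Longrightarrow> beta z M p ! n = int (card {(a, b) \<in> runs z M p n. a < b})"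
  unfolding beta_def by (simp del: upt_Suc)

lemma counts_h:
  fixes z :: "int \<Rightarrow> real"
  assumes z: "strict_mono_on {-1..int M} z" and g: "goodw M h"
  shows "card (runs z M (map z h) n) = c2 (int n) h" "card {(a, b) \<in> runs z M (map z h) n. a < b} = c3 (int n) h"
  using runs_eq[OF z g, of n] card_runs'[OF g, of "int n"] by simp_all

lemma kt_nth: "length k = M + 1 \<Longrightarrow> n < M \<Longrightarrow> ktilde k ! n = k ! (n+1)"
  "length k = M + 1 \<Longrightarrow> ktilde k ! M = 0"
  unfolding ktilde_def by (auto simp: nth_append nth_tl)

theorem proposition1:
  fixes z :: "int \<Rightarrow> real" and M :: nat and k :: "int list"
  assumes "strict_mono_on {-1..int M} z"
    and "M \<ge> 1"
    and "k \<in> LM M"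
  shows "beta z M ` {p. scat_seq z M p \<and> kappa z M p = k} =
         {b. length b = M + 1 \<and>
             (\<forall>n < M + 1. min 1 (ktilde k ! n) \<le> b ! n \<and> b ! n \<le> min (k ! n) (ktilde k ! n))}"
proof -
  note z = assms(1)
  have kL: "length k = M + 1" "\<forall>n < M + 1. k!n \<ge> 0" "k!0 = 1" "\<forall>n < M. k!n = 0 \<longrightarrow> k!(n+1) = 0"
    using assms(3) unfolding LM_def by auto
  show ?thesis
  proof (rule set_eqI, rule iffI)
    fix bb assume "bb \<in> beta z M ` {p. scat_seq z M p \<and> kappa z M p = k}"
    then obtain p where p: "scat_seq z M p" "kappa z M p = k" and bb: "bb = beta z M p" by auto
    obtain h where g: "goodw M h" and ph: "p = map z h" using scat_goodw[OF z p(1)] by auto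
    have kn: "k!n = int (c2 (int n) h)" if "n < M + 1" for n
      using kappa_nth[OF that, of z p] p(2) counts_h[OF z g] ph by simp
    have bn: "bb!n = int (c3 (int n) h)" if "n < M + 1" for n
      using beta_nth[OF that, of z p] bb counts_h[OF z g] ph by simp
    have sh: "stp h" using g unfolding goodw_def by simp
    have hne1: "h \<noteq> []" using g unfolding goodw_def by auto
    have hne: "h \<noteq> []" "hd h = -1" using hne1 g unfolding goodw_def by (auto simp: hd_conv_nth)
    have rng: "\<forall>x\<in>set h. x \<le> int M" using goodw_range[OF g] by (auto simp: in_set_conv_nth)
    have "\<forall>n < M + 1. min 1 (ktilde k ! n) \<le> bb ! n \<and> bb ! n \<le> min (k ! n) (ktilde k ! n)"
    proof (intro allI impI)
      fix n assume n: "n < M + 1"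
      show "min 1 (ktilde k ! n) \<le> bb ! n \<and> bb ! n \<le> min (k ! n) (ktilde k ! n)"
      proof (cases "n < M")
        case True
        have kt: "ktilde k ! n = int (c2 (int n + 1) h)" using kt_nth(1)[OF kL(1) True] kn[of "n+1"] True by (simp add: add.commute)
        have l1: "c3 (int n) h \<le> c2 (int n) h" by (rule c3_le_c2)
        have l2: "c3 (int n) h \<le> c2 (int n + 1) h" by (rule c3_le_c2_succ)
        have l3: "c2 (int n + 1) h > 0 \<Longrightarrow> c3 (int n) h > 0"
          using c3_pos[OF sh hne(1)] hne(2) by simp
        have l4: "min 1 (int (c2 (int n + 1) h)) \<le> int (c3 (int n) h)"
          using l3 by (cases "c2 (int n + 1) h = 0") auto
        show ?thesis using kt l1 l2 l4 bn[OF n] kn[OF n] by auto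
      next
        case False
        then have nM: "n = M" using n by simp
        have "c3 (int n) h = 0" using c3_top[OF rng] nM by simp
        then show ?thesis using kt_nth(2)[OF kL(1)] nM bn[OF n] kL(2) by simp
      qed
    qed
    moreover have "length bb = M + 1" unfolding bb beta_def by simp
    ultimately show "bb \<in> {b. length b = M + 1 \<and>
             (\<forall>n < M + 1. min 1 (ktilde k ! n) \<le> b ! n \<and> b ! n \<le> min (k ! n) (ktilde k ! n))}" by simp
  next
    fix bb assume "bb \<in> {b. length b = M + 1 \<and>
             (\<forall>n < M + 1. min 1 (ktilde k ! n) \<le> b ! n \<and> b ! n \<le> min (k ! n) (ktilde k ! n))}"
    then have bL: "length bb = M + 1" and box: "\<forall>n < M + 1. min 1 (ktilde k ! n) \<le> bb ! n \<and> bb ! n \<le> min (k ! n) (ktilde k ! n)"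
      by auto
    define S where "S = {n. n \<le> M \<and> k!n \<noteq> 0}"
    have finS: "finite S" unfolding S_def by simp
    have S0: "0 \<in> S" unfolding S_def using kL by simp
    define D where "D = Max S"
    have DS: "D \<in> S" unfolding D_def using finS S0 by (intro Max_in) auto
    have DM: "D \<le> M" and kD: "k!D \<noteq> 0" using DS unfolding S_def by auto
    have zero: "k!n = 0" if "D < n" "n \<le> M" for n
    proof (rule ccontr)
      assume "k!n \<noteq> 0"
      then have "n \<in> S" unfolding S_def using that by simp
      then have "n \<le> D" unfolding D_def using finS by simp
      then show False using that by simp
    qed
    have pos: "1 \<le> k!n" if "n \<le> D" for n
    proof (rule ccontr)
      assume "\<not> 1 \<le> k!n"
      moreover have "0 \<le> k!n" using kL(2) that DM by simp
      ultimately have k0: "k!n = 0" by simp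
      have "\<forall>m. n \<le> m \<and> m \<le> M \<longrightarrow> k!m = 0"
      proof (intro allI impI)
        fix m assume "n \<le> m \<and> m \<le> M"
        then show "k!m = 0"
        proof (induction m)
          case 0 then show ?case using k0 by simp
        next
          case (Suc m)
          show ?case
          proof (cases "n = Suc m")
            case True then show ?thesis using k0 by simp
          next
            case False
            then have "k!m = 0" using Suc by simp
            then show ?thesis using kL(4) Suc by simp
          qed
        qed
      qed
      then show False using kD that DM by auto
    qed
    have hypB: "\<forall>n < D. 1 \<le> bb!n \<and> bb!n \<le> k!n \<and> bb!n \<le> k!(Suc n)"
    proof (intro allI impI)
      fix n assume n: "n < D"
      have kt: "ktilde k ! n = k!(n+1)" using kt_nth(1)[OF kL(1)] n DM by simp
      have "1 \<le> k!(n+1)" using pos n by simp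
      then show "1 \<le> bb!n \<and> bb!n \<le> k!n \<and> bb!n \<le> k!(Suc n)" using box[rule_format, of n] kt n DM by auto
    qed
    have bz: "bb!n = 0" if "D \<le> n" "n \<le> M" for n
    proof -
      have "ktilde k ! n = 0"
      proof (cases "n < M")
        case True then show ?thesis using kt_nth(1)[OF kL(1) True] zero[of "n+1"] that by simp
      next
        case False then show ?thesis using kt_nth(2)[OF kL(1)] that by simp
      qed
      then show ?thesis using box[rule_format, of n] that by auto
    qed
    obtain L where L1: "\<forall>(a,b)\<in>set L. 0 \<le> a \<and> a < b \<and> b \<le> int D"
      and L2: "sorted_wrt (\<lambda>x y. fst y \<le> fst x) L"
      and L3: "\<forall>n::nat. int (f2 (int n) ((-1, int D)#L)) = (if n \<le> D then k!n else 0)"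
      and L4: "\<forall>n::nat. int (f3 (int n) ((-1, int D)#L)) = (if n < D then bb!n else 0)"
      using build[of D D "\<lambda>n. k!n" "\<lambda>n. bb!n"] pos kL(3) hypB by auto
    define h where "h = wk ((-1, int D)#L) @ [-1]"
    note GW = goodw_walk[OF L1 L2 DM]
    have g: "goodw M h" unfolding h_def by (rule GW(1))
    define p where "p = map z h"
    have sp: "scat_seq z M p" unfolding p_def by (rule goodw_scat[OF g])
    have kp: "kappa z M p = k"
    proof (rule nth_equalityI)
      show "length (kappa z M p) = length k" using kL(1) unfolding kappa_def by simp
    next
      fix n assume "n < length (kappa z M p)"
      then have n: "n < M + 1" unfolding kappa_def by simp
      have "kappa z M p ! n = int (c2 (int n) h)" using kappa_nth[OF n] counts_h[OF z g] p_def by simp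
      also have "\<dots> = (if n \<le> D then k!n else 0)" using L3 GW(2) unfolding h_def by simp
      also have "\<dots> = k!n" using zero[of n] n by auto
      finally show "kappa z M p ! n = k ! n" .
    qed
    have bp: "beta z M p = bb"
    proof (rule nth_equalityI)
      show "length (beta z M p) = length bb" using bL unfolding beta_def by simp
    next
      fix n assume "n < length (beta z M p)"
      then have n: "n < M + 1" unfolding beta_def by simp
      have "beta z M p ! n = int (c3 (int n) h)" using beta_nth[OF n] counts_h[OF z g] p_def by simp
      also have "\<dots> = (if n < D then bb!n else 0)" using L4 GW(3) unfolding h_def by simp
      also have "\<dots> = bb!n" using bz[of n] n by auto
      finally show "beta z M p ! n = bb ! n" .
    qed
    show "bb \<in> beta z M ` {p. scat_seq z M p \<and> kappa z M p = k}"
      using sp kp bp by blast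
  qed
qed

end
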